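(* Let $v>0$ and $0<q<v$, and for each integer $k$ with $0\le k<\sqrt{v/q}-1$ let $$\psi_{0,k}(r)=\left(1-q\,e^{-r}\right)e^{-\left(\frac{v}{2q(k+1)}-\frac{k+1}{2}\right)r}\;{}_2F_1\!\left(-k,\,\frac{v}{(k+1)q}+1;\,\frac{v}{(k+1)q}-k;\,q\,e^{-r}\right),\qquad r\in(\log q,\infty).$$ Let $j,n$ be integers with $1\le j\le n<\sqrt{v/q}-1$ and define $$\psi_{j,n}(r)=\frac{W\big(\psi_{0,0}(r),\psi_{0,1}(r),\dots,\psi_{0,j-1}(r),\psi_{0,n}(r)\big)}{W\big(\psi_{0,0}(r),\psi_{0,1}(r),\dots,\psi_{0,j-1}(r)\big)}.$$ Then $\psi_{j,n}$ is a nonzero constant multiple of $$e^{-\left(\frac{v}{2q(n+1)}-\frac{n+1}{2}\right)r}\left(1-q\,e^{-r}\right)^{j+1}\;{}_2F_1\!\left(j-n,\,j+1+\frac{v}{q(n+1)};\,\frac{v}{q(n+1)}-n;\,q\,e^{-r}\right),$$ and it satisfies $$-\psi_{j,n}''(r)+\left(\frac{j(j+1)\,q\,e^{-r}}{(1-q\,e^{-r})^2}-\frac{v\,e^{-r}}{1-q\,e^{-r}}\right)\psi_{j,n}(r)=-\left(\frac{v}{2q(n+1)}-\frac{n+1}{2}\right)^2\psi_{j,n}(r)\quad\text{on }(\log q,\infty).$$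
   Context: $W(f_1,\dots,f_k)=\det\big(f_i^{(l-1)}\big)_{i,l=1}^k$ denotes the Wronskian. ${}_2F_1(\alpha,\beta;\gamma;z)=\sum_{k\ge0}\frac{(\alpha)_k(\beta)_k}{(\gamma)_k k!}z^k$ is the Gauss hypergeometric function, $(a)_k$ the Pochhammer symbol. The $\psi_{0,k}$ are the bound-state eigenfunctions of $-\psi''-\frac{v e^{-r}}{1-qe^{-r}}\psi=\mathscr E\psi$ on $(\log q,\infty)$ with Dirichlet conditions at $\log q$ and $\infty$. *)

theory Defs
  imports "HOL-Analysis.Analysis" "Jordan_Normal_Form.Determinant"
begin

definition hyp2F1 :: "real \<Rightarrow> real \<Rightarrow> real \<Rightarrow> real \<Rightarrow> real" where
  "hyp2F1 a b c z = (\<Sum>k. pochhammer a k * pochhammer b k / (pochhammer c k * fact k) * z ^ k)"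

definition wronskian :: "nat \<Rightarrow> (nat \<Rightarrow> real \<Rightarrow> real) \<Rightarrow> real \<Rightarrow> real" where
  "wronskian m fs x = Determinant.det (mat m m (\<lambda>(i, l). (deriv ^^ l) (fs i) x))"

definition psi0 :: "real \<Rightarrow> real \<Rightarrow> nat \<Rightarrow> real \<Rightarrow> real" where
  "psi0 v q k r = (1 - q * exp (- r)) * exp (- ((v / (2 * q * (k + 1)) - (k + 1) / 2) * r))
      * hyp2F1 (- real k) (v / ((k + 1) * q) + 1) (v / ((k + 1) * q) - k) (q * exp (- r))"

definition psi :: "real \<Rightarrow> real \<Rightarrow> nat \<Rightarrow> nat \<Rightarrow> real \<Rightarrow> real" where
  "psi v q j n r = wronskian (j + 1) (\<lambda>i. if i < j then psi0 v q i else psi0 v q n) r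
                 / wronskian j (\<lambda>i. psi0 v q i) r"

end

theory Submission
  imports Defs
begin


lemma prod_list_ones: "prod_list (map (\<lambda>_. 1::'a::monoid_mult) xs) = 1"
  by (induct xs) simp_all

lemma wronskian_step:
  fixes fs :: "nat \<Rightarrow> real \<Rightarrow> real" and c :: "nat \<Rightarrow> real"
  assumes c1: "c j = 1" and z: "\<And>i. i < j \<Longrightarrow> (\<Sum>l\<le>j. c l * (deriv^^l) (fs i) r) = 0"
  shows "wronskian (Suc j) fs r = wronskian j fs r * (\<Sum>l\<le>j. c l * (deriv^^l) (fs j) r)"
proof -
  define B where "B = mat (Suc j) (Suc j) (\<lambda>(i,l). (deriv^^l) (fs i) r)"
  define E :: "real mat" where "E = mat (Suc j) (Suc j) (\<lambda>(l,l'). if l' = j then c l else if l = l' then 1 else 0)"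
  have B: "B \<in> carrier_mat (Suc j) (Suc j)" and E: "E \<in> carrier_mat (Suc j) (Suc j)"
    unfolding B_def E_def by auto
  have ut: "upper_triangular E" unfolding upper_triangular_def E_def by auto
  have "diag_mat E = map (\<lambda>i. 1) [0..<Suc j]"
    unfolding diag_mat_def E_def by (intro map_cong) (auto simp: c1)
  then have dE: "det E = 1" using det_upper_triangular[OF ut E] by (simp only: prod_list_ones)
  have BE: "B * E \<in> carrier_mat (Suc j) (Suc j)" using B E by auto
  have ent: "(B * E) $$ (i, l') = (if l' = j then (\<Sum>l\<le>j. c l * (deriv^^l) (fs i) r) else (deriv^^l') (fs i) r)"
    if "i < Suc j" "l' < Suc j" for i l'
  proof -
    have "(B * E) $$ (i, l') = (\<Sum>k<Suc j. B $$ (i,k) * E $$ (k,l'))"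
      using that B E by (simp add: scalar_prod_def lessThan_atLeast0)
    also have "\<dots> = (if l' = j then (\<Sum>l\<le>j. c l * (deriv^^l) (fs i) r) else (deriv^^l') (fs i) r)"
    proof (cases "l' = j")
      case True
      then show ?thesis using that unfolding B_def E_def
        by (simp add: lessThan_Suc_atMost mult.commute)
    next
      case False
      have "(\<Sum>k<Suc j. B $$ (i,k) * E $$ (k,l')) = (\<Sum>k<Suc j. if k = l' then (deriv^^l') (fs i) r else 0)"
        using that False unfolding B_def E_def by (intro sum.cong) auto
      also have "\<dots> = (deriv^^l') (fs i) r" using that by simp
      finally show ?thesis using False by simp
    qed
    finally show ?thesis .
  qed
  have "det (B * E) = det B" using det_mult[OF B E] dE by simp
  also have "det (B * E) = (\<Sum>i<Suc j. (B * E) $$ (i,j) * cofactor (B * E) i j)"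
    by (rule laplace_expansion_column[OF BE]) simp
  also have "\<dots> = (B * E) $$ (j,j) * cofactor (B * E) j j"
    by (rule sum.neutral_const[THEN trans, OF refl] | (subst sum.remove[of _ j]; auto simp: ent z intro!: sum.neutral))
  also have "cofactor (B * E) j j = det (mat j j (\<lambda>(i,l). (deriv^^l) (fs i) r))"
  proof -
    have "mat_delete (B * E) j j = mat j j (\<lambda>(i,l). (deriv^^l) (fs i) r)"
      by (rule eq_matI) (use BE B E in \<open>auto simp del: index_mult_mat simp add: mat_delete_def ent carrier_matD[OF BE]\<close>)
    then show ?thesis unfolding cofactor_def by (simp flip: mult_2)
  qed
  finally show ?thesis unfolding wronskian_def B_def[symmetric] using ent[of j j] by (simp add: mult.commute)
qed



definition hc :: "real \<Rightarrow> real \<Rightarrow> real \<Rightarrow> nat \<Rightarrow> real" where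
  "hc a b c k = pochhammer a k * pochhammer b k / (pochhammer c k * fact k)"

definition Fp :: "real \<Rightarrow> real \<Rightarrow> real \<Rightarrow> nat \<Rightarrow> real poly" where
  "Fp a b c N = (\<Sum>k\<le>N. monom (hc a b c k) k)"

definition th :: "real poly \<Rightarrow> real poly" where
  "th p = pCons 0 (pderiv p)"

lemma hc_zero: assumes "a = - real N" "N < k" shows "hc a b c k = 0"
proof -
  have "pochhammer a k = 0" using assms by (auto simp: pochhammer_eq_0_iff)
  then show ?thesis by (simp add: hc_def)
qed

lemma coeff_Fp: assumes "a = - real N" shows "coeff (Fp a b c N) k = hc a b c k"
  using hc_zero[OF assms, of k] by (auto simp: Fp_def coeff_sum coeff_monom)

lemma hyp_Fp: assumes "a = - real N" shows "hyp2F1 a b c z = poly (Fp a b c N) z"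
proof -
  have "hyp2F1 a b c z = (\<Sum>k\<in>{..N}. hc a b c k * z ^ k)"
    unfolding hyp2F1_def hc_def[symmetric]
    by (rule suminf_finite) (use hc_zero[OF assms] in auto)
  also have "\<dots> = poly (Fp a b c N) z"
    by (simp add: Fp_def poly_sum poly_monom)
  finally show ?thesis .
qed

lemma coeff_th: "coeff (th p) k = real k * coeff p k"
  by (cases k) (simp_all add: th_def coeff_pderiv)

lemma poly_th: "poly (th p) x = x * poly (pderiv p) x"
  by (simp add: th_def)

lemma hc_0[simp]: "hc a b c 0 = 1" by (simp add: hc_def)

lemma frac_aux: fixes Pa Pb Pc f u w d1 d2 :: real
  assumes "Pc \<noteq> 0" "f \<noteq> 0" "d1 \<noteq> 0" "d2 \<noteq> 0"
  shows "(Pa*u)*(Pb*w)/((Pc*d1)*(f*d2)) = Pa*Pb/(Pc*f) * (u*w) / (d1*d2)"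
  using assms by (simp add: field_simps)

lemma hc_Suc': assumes "c > 0"
  shows "hc a b c (Suc i) = hc a b c i * ((a + real i) * (b + real i)) / ((c + real i) * (real i + 1))"
proof -
  have p: "pochhammer c i \<noteq> 0" "c + real i \<noteq> 0" using assms pochhammer_pos[of c i] by auto
  have f: "fact i \<noteq> (0::real)" "real i + 1 \<noteq> 0" by simp_all
  have e: "hc a b c (Suc i) = (pochhammer a i * (a + real i)) * (pochhammer b i * (b + real i)) / ((pochhammer c i * (c + real i)) * (fact i * (real i + 1)))"
    unfolding hc_def pochhammer_Suc fact_Suc by (simp add: algebra_simps)
  have f1: "hc a b c i = pochhammer a i * pochhammer b i / (pochhammer c i * fact i)" by (simp add: hc_def)
  show ?thesis unfolding f1 e by (rule frac_aux[OF p(1) f(1) p(2) f(2)])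
qed

lemma hc_Suc: assumes "c > 0"
  shows "hc a b c (Suc i) * ((c + real i) * (real i + 1)) = hc a b c i * ((a + real i) * (b + real i))"
proof -
  have "(c + real i) * (real i + 1) \<noteq> 0" using assms by (simp add: add_pos_nonneg)
  then show ?thesis unfolding hc_Suc'[OF assms] by simp
qed

lemma hc_shift: assumes "c > 0"
  shows "hc a b c (Suc i) = hc (a+1) (b+1) c i * (a * b) / ((c + real i) * (real i + 1))"
proof -
  have p: "pochhammer c i \<noteq> 0" "c + real i \<noteq> 0" using assms pochhammer_pos[of c i] by auto
  have f: "fact i \<noteq> (0::real)" "real i + 1 \<noteq> 0" by simp_all
  have e: "hc a b c (Suc i) = (pochhammer (a+1) i * a) * (pochhammer (b+1) i * b) / ((pochhammer c i * (c + real i)) * (fact i * (real i + 1)))"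
    unfolding hc_def pochhammer_rec[of a] pochhammer_rec[of b] pochhammer_Suc[of c] fact_Suc by (simp add: algebra_simps)
  have f1: "hc (a+1) (b+1) c i = pochhammer (a+1) i * pochhammer (b+1) i / (pochhammer c i * fact i)" by (simp add: hc_def)
  show ?thesis unfolding f1 e by (rule frac_aux[OF p(1) f(1) p(2) f(2)])
qed

lemma hc_crum: assumes "c > 0" and lam: "lam * (a + b - c + 1) = - a * b"
  shows "(lam - real (Suc i)) * hc a b c (Suc i) = lam * (hc (a+1) (b+1) c (Suc i) - hc (a+1) (b+1) c i)"
proof -
  define G where "G = hc (a+1) (b+1) c i"
  define D where "D = (c + real i) * (real i + 1)"
  have D: "D \<noteq> 0" using assms unfolding D_def by (simp add: add_pos_nonneg)
  have e1: "hc a b c (Suc i) = a * b * G / D" unfolding G_def D_def hc_shift[OF assms(1)] by simp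
  have e2: "hc (a+1) (b+1) c (Suc i) = G * ((a + 1 + real i) * (b + 1 + real i)) / D"
    unfolding G_def D_def hc_Suc'[OF assms(1)] by simp
  have key: "(lam - (real i + 1)) * (a*b) = lam * ((a+1+real i)*(b+1+real i) - D)"
  proof -
    have "lam * ((a+1+real i)*(b+1+real i) - D) = lam * (a*b) + (real i + 1) * (lam * (a + b - c + 1))"
      unfolding D_def by (simp add: algebra_simps)
    also have "\<dots> = (lam - (real i + 1)) * (a*b)" unfolding lam by (simp add: algebra_simps)
    finally show ?thesis by simp
  qed
  have "(lam - real (Suc i)) * (a * b * G / D) = ((lam - (real i + 1)) * (a*b)) * G / D" by simp
  also have "\<dots> = lam * ((a+1+real i)*(b+1+real i) - D) * G / D" by (simp only: key)
  also have "\<dots> = lam * (G * ((a + 1 + real i) * (b + 1 + real i)) / D - G)" using D by (simp add: field_simps)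
  finally have "(lam - real (Suc i)) * (a * b * G / D) = lam * (G * ((a + 1 + real i) * (b + 1 + real i)) / D - G)" .
  then show ?thesis unfolding e1 e2 G_def .
qed

lemma crum_poly:
  assumes a: "a = - real (Suc N)" and c: "c > 0" and lam: "lam * (a + b - c + 1) = - a * b"
  shows "Polynomial.smult lam (Fp a b c (Suc N)) - th (Fp a b c (Suc N)) = Polynomial.smult lam ([:1,-1:] * Fp (a+1) (b+1) c N)"
proof -
  have a1: "a + 1 = - real N" using a by simp
  have a1': "1 + a = - real N" using a by simp
  have m: "[:1,-1:] * p = p - pCons 0 p" for p :: "real poly"
    by (simp add: mult_pCons_left)
  show ?thesis
  proof (rule poly_eqI)
    fix k
    show "coeff (Polynomial.smult lam (Fp a b c (Suc N)) - th (Fp a b c (Suc N))) k = coeff (Polynomial.smult lam ([:1,-1:] * Fp (a+1) (b+1) c N)) k"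
    proof (cases k)
      case 0 then show ?thesis by (simp add: m coeff_th coeff_Fp[OF a] coeff_Fp[OF a1])
    next
      case (Suc i)
      then show ?thesis using hc_crum[OF c lam, of i]
        by (simp add: m coeff_th coeff_Fp[OF a] coeff_Fp[OF a1] coeff_Fp[OF a1'] algebra_simps)
    qed
  qed
qed

lemma hyp_ode_poly:
  assumes a: "a = - real N" and c: "c > 0"
  shows "th (th (Fp a b c N)) + Polynomial.smult (c - 1) (th (Fp a b c N))
       = pCons 0 (th (th (Fp a b c N)) + Polynomial.smult (a + b) (th (Fp a b c N)) + Polynomial.smult (a * b) (Fp a b c N))"
proof (rule poly_eqI)
  fix k
  show "coeff (th (th (Fp a b c N)) + Polynomial.smult (c - 1) (th (Fp a b c N))) k =
        coeff (pCons 0 (th (th (Fp a b c N)) + Polynomial.smult (a + b) (th (Fp a b c N)) + Polynomial.smult (a * b) (Fp a b c N))) k"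
  proof (cases k)
    case 0 then show ?thesis by (simp add: coeff_th)
  next
    case (Suc i)
    have "(real (Suc i) * real (Suc i) + (c - 1) * real (Suc i)) * hc a b c (Suc i)
        = hc a b c (Suc i) * ((c + real i) * (real i + 1))" by (simp add: algebra_simps)
    also have "\<dots> = hc a b c i * ((a + real i) * (b + real i))" by (rule hc_Suc[OF c])
    finally have "(real (Suc i) * real (Suc i) + (c - 1) * real (Suc i)) * hc a b c (Suc i)
       = real i * real i * hc a b c i + (a + b) * (real i * hc a b c i) + a * b * hc a b c i"
      by (simp add: algebra_simps)
    then show ?thesis using Suc by (simp add: coeff_th coeff_Fp[OF a] algebra_simps)
  qed
qed



lemma x_lt1: fixes q r :: real assumes "q > 0" "ln q < r" shows "q * exp (- r) < 1"
proof -
  have "exp (- r) < exp (- ln q)" by (subst exp_less_cancel_iff) (use assms in linarith)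
  also have "exp (- ln q) = 1 / q" using assms by (simp add: exp_minus inverse_eq_divide)
  finally show ?thesis using assms by (simp add: field_simps)
qed

lemma x_ne1: fixes q r :: real assumes "q > 0" "ln q < r" shows "1 - q * exp (- r) \<noteq> 0"
  using x_lt1[OF assms] by linarith

lemma d_x: "((\<lambda>r. q * exp (- r)) has_real_derivative - (q * exp (- r))) (at r)"
  by (auto intro!: derivative_eq_intros)

lemma d_poly: "((\<lambda>r. poly p (q * exp (- r))) has_real_derivative - poly (th p) (q * exp (- r))) (at r)"
  using DERIV_chain2[OF poly_DERIV d_x, of p q r] by (simp add: poly_th mult.commute)

lemma d_pow: assumes "1 - q * exp (- r) \<noteq> 0"
  shows "((\<lambda>r. (1 - q * exp (- r)) ^ m) has_real_derivative
     real m * (q * exp (- r) / (1 - q * exp (- r))) * (1 - q * exp (- r)) ^ m) (at r)"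
proof -
  have "((\<lambda>r. (1 - q * exp (- r)) ^ m) has_real_derivative
     real m * (1 - q * exp (- r)) ^ (m - 1) * (q * exp (- r))) (at r)"
    by (auto intro!: derivative_eq_intros)
  moreover have "real m * (1 - q * exp (- r)) ^ (m - 1) * (q * exp (- r)) =
     real m * (q * exp (- r) / (1 - q * exp (- r))) * (1 - q * exp (- r)) ^ m"
    using assms by (cases m) (simp_all add: field_simps)
  ultimately show ?thesis by simp
qed

lemma d_frac: assumes "1 - q * exp (- r) \<noteq> 0"
  shows "((\<lambda>r. q * exp (- r) / (1 - q * exp (- r))) has_real_derivative
     - (q * exp (- r) / (1 - q * exp (- r)) ^ 2)) (at r)"
proof -
  have "((\<lambda>r. q * exp (- r) / (1 - q * exp (- r))) has_real_derivative
     ((- (q * exp (- r))) * (1 - q * exp (- r)) - q * exp (- r) * (q * exp (- r))) / ((1 - q * exp (- r)) * (1 - q * exp (- r)))) (at r)"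
    by (rule DERIV_divide[OF d_x]) (use assms in \<open>auto intro!: derivative_eq_intros\<close>)
  moreover have "((- (q * exp (- r))) * (1 - q * exp (- r)) - q * exp (- r) * (q * exp (- r))) / ((1 - q * exp (- r)) * (1 - q * exp (- r)))
     = - (q * exp (- r) / (1 - q * exp (- r)) ^ 2)"
    using assms by (simp add: field_simps power2_eq_square)
  ultimately show ?thesis by simp
qed

lemma d_gen: assumes "1 - q * exp (- r) \<noteq> 0" and H: "(H has_real_derivative H') (at r)"
  shows "((\<lambda>r. exp (- (K * r)) * (1 - q * exp (- r)) ^ m * H r) has_real_derivative
      exp (- (K * r)) * (1 - q * exp (- r)) ^ m * ((- K + real m * (q * exp (- r) / (1 - q * exp (- r)))) * H r + H')) (at r)"
proof -
  have e: "((\<lambda>r. exp (- (K * r))) has_real_derivative - K * exp (- (K * r))) (at r)"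
    by (auto intro!: derivative_eq_intros)
  from DERIV_mult[OF DERIV_mult[OF e d_pow[OF assms(1), of m]] H]
  show ?thesis by (rule DERIV_cong) (simp add: algebra_simps)
qed

definition inR :: "real \<Rightarrow> (real \<Rightarrow> real) \<Rightarrow> bool" where
  "inR q f \<longleftrightarrow> (\<exists>p m. \<forall>r. ln q < r \<longrightarrow> f r = poly p (q * exp (- r)) / (1 - q * exp (- r)) ^ m)"

lemma poly_P: fixes x :: real shows "poly ([:1, -1:] ^ k) x = (1 - x) ^ k"
proof -
  have "poly [:1, -1:] x = 1 - x" by simp
  then show ?thesis by (simp add: poly_power)
qed

lemma inR_deriv: assumes q: "q > 0" and f: "inR q f"
  shows "inR q (deriv f) \<and> (\<forall>r. ln q < r \<longrightarrow> (f has_real_derivative deriv f r) (at r))"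
proof -
  obtain p m where pm: "\<And>r. ln q < r \<Longrightarrow> f r = poly p (q * exp (- r)) / (1 - q * exp (- r)) ^ m"
    using f unfolding inR_def by blast
  define Q where "Q = - (th p * [:1, -1:] + Polynomial.smult (real m) (pCons 0 p))"
  have D: "(f has_real_derivative poly Q (q * exp (- r)) / (1 - q * exp (- r)) ^ (Suc m)) (at r)"
    if r: "ln q < r" for r
  proof -
    have ne: "1 - q * exp (- r) \<noteq> 0" using x_ne1[OF q r] .
    have "((\<lambda>r. poly p (q * exp (- r)) / (1 - q * exp (- r)) ^ m) has_real_derivative
       ((- poly (th p) (q * exp (- r))) * (1 - q * exp (- r)) ^ m -
         poly p (q * exp (- r)) * (real m * (q * exp (- r) / (1 - q * exp (- r))) * (1 - q * exp (- r)) ^ m))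
       / ((1 - q * exp (- r)) ^ m * (1 - q * exp (- r)) ^ m)) (at r)"
      by (rule DERIV_divide[OF d_poly d_pow[OF ne]]) (use ne in simp)
    moreover have "((- poly (th p) (q * exp (- r))) * (1 - q * exp (- r)) ^ m -
         poly p (q * exp (- r)) * (real m * (q * exp (- r) / (1 - q * exp (- r))) * (1 - q * exp (- r)) ^ m))
       / ((1 - q * exp (- r)) ^ m * (1 - q * exp (- r)) ^ m) = poly Q (q * exp (- r)) / (1 - q * exp (- r)) ^ (Suc m)"
      using ne unfolding Q_def by (simp add: field_simps power_add[symmetric] mult_2[symmetric])
    ultimately have "((\<lambda>r. poly p (q * exp (- r)) / (1 - q * exp (- r)) ^ m) has_real_derivative
        poly Q (q * exp (- r)) / (1 - q * exp (- r)) ^ (Suc m)) (at r)" by simp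
    then show ?thesis
      by (rule has_field_derivative_transform_within_open[where S = "{ln q<..}"]) (use r pm in auto)
  qed
  have "deriv f r = poly Q (q * exp (- r)) / (1 - q * exp (- r)) ^ (Suc m)" if "ln q < r" for r
    using DERIV_imp_deriv[OF D[OF that]] .
  then have "inR q (deriv f)" unfolding inR_def by blast
  moreover have "\<forall>r. ln q < r \<longrightarrow> (f has_real_derivative deriv f r) (at r)"
    using D \<open>\<And>r. ln q < r \<Longrightarrow> deriv f r = _\<close> by simp
  ultimately show ?thesis by blast
qed

lemma inR_const: "inR q (\<lambda>r. c)"
  unfolding inR_def by (rule exI[of _ "[:c:]"], rule exI[of _ 0]) simp

lemma inR_add: assumes q: "q > 0" and "inR q f" "inR q g" shows "inR q (\<lambda>r. f r + g r)"
proof -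
  obtain p m where pm: "\<And>r. ln q < r \<Longrightarrow> f r = poly p (q * exp (- r)) / (1 - q * exp (- r)) ^ m"
    using assms unfolding inR_def by blast
  obtain p' m' where pm': "\<And>r. ln q < r \<Longrightarrow> g r = poly p' (q * exp (- r)) / (1 - q * exp (- r)) ^ m'"
    using assms unfolding inR_def by blast
  have "f r + g r = poly (p * [:1,-1:] ^ m' + p' * [:1,-1:] ^ m) (q * exp (- r)) / (1 - q * exp (- r)) ^ (m + m')"
    if r: "ln q < r" for r
    unfolding pm[OF r] pm'[OF r] using x_ne1[OF q r] by (simp add: poly_P field_simps power_add)
  then show ?thesis unfolding inR_def by blast
qed

lemma inR_mult: assumes q: "q > 0" and "inR q f" "inR q g" shows "inR q (\<lambda>r. f r * g r)"
proof -
  obtain p m where pm: "\<And>r. ln q < r \<Longrightarrow> f r = poly p (q * exp (- r)) / (1 - q * exp (- r)) ^ m"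
    using assms unfolding inR_def by blast
  obtain p' m' where pm': "\<And>r. ln q < r \<Longrightarrow> g r = poly p' (q * exp (- r)) / (1 - q * exp (- r)) ^ m'"
    using assms unfolding inR_def by blast
  have "f r * g r = poly (p * p') (q * exp (- r)) / (1 - q * exp (- r)) ^ (m + m')"
    if r: "ln q < r" for r
    unfolding pm[OF r] pm'[OF r] using x_ne1[OF q r] by (simp add: field_simps power_add)
  then show ?thesis unfolding inR_def by blast
qed

lemma inR_diff: assumes q: "q > 0" and "inR q f" "inR q g" shows "inR q (\<lambda>r. f r - g r)"
proof -
  have "inR q (\<lambda>r. f r + (- 1) * g r)"
    by (rule inR_add[OF q assms(2) inR_mult[OF q inR_const assms(3)]])
  then show ?thesis by simp
qed



definition kap :: "real \<Rightarrow> real \<Rightarrow> nat \<Rightarrow> real" where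
  "kap v q n = v / (2 * q * (real n + 1)) - (real n + 1) / 2"

definition wfun :: "real \<Rightarrow> real \<Rightarrow> nat \<Rightarrow> real \<Rightarrow> real" where
  "wfun v q k r = - kap v q k + real (k + 1) * (q * exp (- r) / (1 - q * exp (- r)))"

primrec mc :: "real \<Rightarrow> real \<Rightarrow> nat \<Rightarrow> nat \<Rightarrow> real \<Rightarrow> real" where
  "mc v q 0 l = (\<lambda>r. if l = 0 then 1 else 0)"
| "mc v q (Suc j) l = (\<lambda>r. deriv (mc v q j l) r + (if l = 0 then 0 else mc v q j (l - 1) r) - wfun v q j r * mc v q j l r)"

definition Mop :: "real \<Rightarrow> real \<Rightarrow> nat \<Rightarrow> (real \<Rightarrow> real) \<Rightarrow> real \<Rightarrow> real" where
  "Mop v q j h = (\<lambda>r. \<Sum>l\<le>j. mc v q j l r * (deriv ^^ l) h r)"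

definition smooth :: "(real \<Rightarrow> real) \<Rightarrow> bool" where
  "smooth h \<longleftrightarrow> (\<forall>l r. (deriv ^^ l) h differentiable (at r))"

lemma mc_gt: "j < l \<Longrightarrow> mc v q j l = (\<lambda>r. 0)"
proof (induction j arbitrary: l)
  case 0 then show ?case by simp
next
  case (Suc j)
  have "mc v q j l = (\<lambda>r. 0)" "mc v q j (l - 1) = (\<lambda>r. 0)" using Suc by auto
  then show ?case using Suc.prems by simp
qed

lemma mc_eq: "mc v q j j = (\<lambda>r. 1)"
proof (induction j)
  case 0 then show ?case by simp
next
  case (Suc j)
  have "mc v q j (Suc j) = (\<lambda>r. 0)" by (rule mc_gt) simp
  then show ?case using Suc by simp
qed

lemma inR_wf: assumes q: "q > 0" shows "inR q (wfun v q k)"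
proof -
  have "wfun v q k r = poly [:- kap v q k, kap v q k + real (k + 1):] (q * exp (- r)) / (1 - q * exp (- r)) ^ 1"
    if r: "ln q < r" for r
    using x_ne1[OF q r] unfolding wfun_def by (simp add: field_simps)
  then show ?thesis unfolding inR_def by blast
qed

lemma inR_mc: assumes q: "q > 0" shows "inR q (mc v q j l)"
proof (induction j arbitrary: l)
  case 0 then show ?case by (simp add: inR_const)
next
  case (Suc j)
  have d: "inR q (deriv (mc v q j l))" using inR_deriv[OF q Suc.IH] by blast
  have s: "inR q (\<lambda>r. if l = 0 then 0 else mc v q j (l - 1) r)"
    by (cases "l = 0") (simp_all add: inR_const Suc.IH)
  have "inR q (\<lambda>r. (deriv (mc v q j l) r + (if l = 0 then 0 else mc v q j (l - 1) r)) - wfun v q j r * mc v q j l r)"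
    by (intro inR_diff[OF q] inR_add[OF q] inR_mult[OF q] d s inR_wf[OF q] Suc.IH)
  then show ?case by simp
qed

lemma smooth_D: "smooth h \<Longrightarrow> ((deriv ^^ l) h has_real_derivative (deriv ^^ (Suc l)) h r) (at r)"
  unfolding smooth_def using DERIV_deriv_iff_real_differentiable by force

lemma Mop_deriv:
  assumes q: "q > 0" and h: "smooth h" and r: "ln q < r"
  shows "(Mop v q j h has_real_derivative
     (\<Sum>l\<le>j. deriv (mc v q j l) r * (deriv ^^ l) h r + mc v q j l r * (deriv ^^ (Suc l)) h r)) (at r)"
proof -
  have dm: "(mc v q j l has_real_derivative deriv (mc v q j l) r) (at r)" for l
    using inR_deriv[OF q inR_mc[OF q]] r by blast
  show ?thesis unfolding Mop_def
    by (rule DERIV_sum) (rule DERIV_cong[OF DERIV_mult[OF dm smooth_D[OF h]]], simp)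
qed

lemma Mop_Suc:
  assumes q: "q > 0" and h: "smooth h" and r: "ln q < r"
  shows "Mop v q (Suc j) h r = deriv (Mop v q j h) r - wfun v q j r * Mop v q j h r"
proof -
  let ?D = "\<lambda>l. (deriv ^^ l) h r"
  have dM: "deriv (Mop v q j h) r = (\<Sum>l\<le>j. deriv (mc v q j l) r * ?D l + mc v q j l r * ?D (Suc l))"
    by (rule DERIV_imp_deriv[OF Mop_deriv[OF q h r]])
  have z: "mc v q j (Suc j) = (\<lambda>r. 0)" by (rule mc_gt) simp
  have S1: "(\<Sum>l\<le>j. deriv (mc v q j l) r * ?D l) = (\<Sum>l\<le>Suc j. deriv (mc v q j l) r * ?D l)"
    using z by simp
  have S2: "(\<Sum>l\<le>j. mc v q j l r * ?D (Suc l)) = (\<Sum>l\<le>Suc j. (if l = 0 then 0 else mc v q j (l - 1) r) * ?D l)"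
    by (subst sum.atMost_Suc_shift) simp
  have S3: "Mop v q j h r = (\<Sum>l\<le>Suc j. mc v q j l r * ?D l)"
    unfolding Mop_def using z by simp
  have "Mop v q (Suc j) h r = (\<Sum>l\<le>Suc j. deriv (mc v q j l) r * ?D l)
        + (\<Sum>l\<le>Suc j. (if l = 0 then 0 else mc v q j (l - 1) r) * ?D l)
        - wfun v q j r * (\<Sum>l\<le>Suc j. mc v q j l r * ?D l)"
    unfolding Mop_def mc.simps
    by (simp add: algebra_simps sum.distrib sum_subtractf sum_distrib_left)
  also have "\<dots> = deriv (Mop v q j h) r - wfun v q j r * Mop v q j h r"
    unfolding dM S3[symmetric] S1[symmetric] S2[symmetric] by (simp add: sum.distrib)
  finally show ?thesis .
qed

lemma Mop_0: "Mop v q 0 h = h"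
  unfolding Mop_def by (simp add: fun_eq_iff)

lemma expsum_derivs:
  fixes c d a b :: "'i \<Rightarrow> real"
  shows "(deriv ^^ l) (\<lambda>r. \<Sum>i\<in>S. c i * exp (a i * r) + d i * exp (b i * r))
       = (\<lambda>r. \<Sum>i\<in>S. c i * a i ^ l * exp (a i * r) + d i * b i ^ l * exp (b i * r))"
proof (induction l)
  case 0 then show ?case by simp
next
  case (Suc l)
  have "((\<lambda>r. \<Sum>i\<in>S. c i * a i ^ l * exp (a i * r) + d i * b i ^ l * exp (b i * r)) has_real_derivative
        (\<Sum>i\<in>S. c i * a i ^ Suc l * exp (a i * r) + d i * b i ^ Suc l * exp (b i * r))) (at r)" for r
    by (rule DERIV_sum) (auto intro!: derivative_eq_intros simp: algebra_simps)
  then show ?case unfolding funpow.simps(2) o_def Suc.IH by (intro ext DERIV_imp_deriv)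
qed

lemma DERIV_differentiable: "(f has_real_derivative D) (at r) \<Longrightarrow> f differentiable (at r)"
  using differentiableI has_field_derivative_imp_has_derivative by blast

lemma smooth_expsum:
  fixes c d a b :: "'i \<Rightarrow> real"
  shows "smooth (\<lambda>r. \<Sum>i\<in>S. c i * exp (a i * r) + d i * exp (b i * r))"
  unfolding smooth_def expsum_derivs
  by (intro allI DERIV_differentiable DERIV_sum) (auto intro!: derivative_eq_intros)



definition FF :: "real \<Rightarrow> real \<Rightarrow> nat \<Rightarrow> nat \<Rightarrow> real poly" where
  "FF v q j n = Fp (real j - real n) (real j + 1 + v / (q * (real n + 1))) (v / (q * (real n + 1)) - real n) (n - j)"

definition gfun :: "real \<Rightarrow> real \<Rightarrow> nat \<Rightarrow> nat \<Rightarrow> real \<Rightarrow> real" where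
  "gfun v q j n r = exp (- ((v / (2 * q * (n + 1)) - (n + 1) / 2) * r))
              * (1 - q * exp (- r)) ^ (j + 1)
              * hyp2F1 (real j - real n) (real j + 1 + v / (q * (n + 1))) (v / (q * (n + 1)) - n)
                  (q * exp (- r))"

definition g1 :: "real \<Rightarrow> real \<Rightarrow> nat \<Rightarrow> nat \<Rightarrow> real \<Rightarrow> real" where
  "g1 v q j n r = exp (- (kap v q n * r)) * (1 - q * exp (- r)) ^ (j + 1) *
     ((- kap v q n + real (j + 1) * (q * exp (- r) / (1 - q * exp (- r)))) * poly (FF v q j n) (q * exp (- r))
      + - poly (th (FF v q j n)) (q * exp (- r)))"

definition g2 :: "real \<Rightarrow> real \<Rightarrow> nat \<Rightarrow> nat \<Rightarrow> real \<Rightarrow> real" where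
  "g2 v q j n r = exp (- (kap v q n * r)) * (1 - q * exp (- r)) ^ (j + 1) *
     ((- kap v q n + real (j + 1) * (q * exp (- r) / (1 - q * exp (- r)))) *
        ((- kap v q n + real (j + 1) * (q * exp (- r) / (1 - q * exp (- r)))) * poly (FF v q j n) (q * exp (- r))
         + - poly (th (FF v q j n)) (q * exp (- r)))
      + (- (real (j + 1) * (q * exp (- r) / (1 - q * exp (- r)) ^ 2)) * poly (FF v q j n) (q * exp (- r))
         - (- kap v q n + real (j + 1) * (q * exp (- r) / (1 - q * exp (- r)))) * poly (th (FF v q j n)) (q * exp (- r))
         + poly (th (th (FF v q j n))) (q * exp (- r))))"

lemma gfun_alt: assumes "j \<le> n"
  shows "gfun v q j n r = exp (- (kap v q n * r)) * (1 - q * exp (- r)) ^ (j + 1) * poly (FF v q j n) (q * exp (- r))"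
proof -
  have a: "real j - real n = - real (n - j)" using assms by (simp add: of_nat_diff)
  show ?thesis unfolding gfun_def FF_def kap_def hyp_Fp[OF a] by simp
qed

lemma gfun_deriv: assumes q: "q > 0" and r: "ln q < r" and jn: "j \<le> n"
  shows "(gfun v q j n has_real_derivative g1 v q j n r) (at r)"
proof -
  have eq: "gfun v q j n = (\<lambda>r. exp (- (kap v q n * r)) * (1 - q * exp (- r)) ^ (j + 1) * poly (FF v q j n) (q * exp (- r)))"
    by (rule ext) (rule gfun_alt[OF jn])
  show ?thesis unfolding eq g1_def
    by (rule d_gen[OF x_ne1[OF q r] d_poly])
qed

lemma aux_g2: fixes E PP a b m F F1 F2 :: real
  shows "E*PP*(a*(a*F + -F1) + ((0 + m*(-b))*F + (-F1)*a + -(-F2))) = E*PP*(a*(a*F + -F1) + (-(m*b)*F - a*F1 + F2))"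
  by (simp add: algebra_simps)

lemma g1_deriv: assumes q: "q > 0" and r: "ln q < r"
  shows "(g1 v q j n has_real_derivative g2 v q j n r) (at r)"
proof -
  have ne: "1 - q * exp (- r) \<noteq> 0" using x_ne1[OF q r] .
  have hs: "((\<lambda>r. - kap v q n + real (j + 1) * (q * exp (- r) / (1 - q * exp (- r)))) has_real_derivative
      0 + real (j + 1) * (- (q * exp (- r) / (1 - q * exp (- r)) ^ 2))) (at r)"
    by (intro DERIV_add DERIV_const DERIV_cmult d_frac[OF ne])
  have H: "((\<lambda>r. (- kap v q n + real (j + 1) * (q * exp (- r) / (1 - q * exp (- r)))) * poly (FF v q j n) (q * exp (- r))
      + - poly (th (FF v q j n)) (q * exp (- r))) has_real_derivative
      (0 + real (j + 1) * (- (q * exp (- r) / (1 - q * exp (- r)) ^ 2))) * poly (FF v q j n) (q * exp (- r))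
      + (- poly (th (FF v q j n)) (q * exp (- r))) * (- kap v q n + real (j + 1) * (q * exp (- r) / (1 - q * exp (- r))))
      + - (- poly (th (th (FF v q j n))) (q * exp (- r)))) (at r)"
    by (intro DERIV_add DERIV_mult hs d_poly DERIV_minus)
  show ?thesis unfolding g1_def g2_def
    by (rule DERIV_cong[OF d_gen[OF ne H]]) (rule aux_g2)
qed

lemma aux_crum: fixes E PP K Kj ms F F1 :: real
  shows "E*PP*((-K + ms)*F + - F1) - (-Kj + ms)*(E*PP*F) = E*PP*((Kj - K)*F - F1)"
  by (simp add: algebra_simps)

lemma crum_real: assumes "j \<le> n"
  shows "g1 v q j n r - wfun v q j r * gfun v q j n r = exp (- (kap v q n * r)) * (1 - q * exp (- r)) ^ (j + 1) *
     ((kap v q j - kap v q n) * poly (FF v q j n) (q * exp (- r)) - poly (th (FF v q j n)) (q * exp (- r)))"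
  unfolding g1_def wfun_def gfun_alt[OF assms] by (rule aux_crum)

lemma FF_jj: "FF v q j j = 1"
  unfolding FF_def Fp_def by (simp add: one_pCons)

lemma crum_eq: assumes "j = n"
  shows "g1 v q j n r - wfun v q j r * gfun v q j n r = 0"
  unfolding crum_real[of j n, OF eq_imp_le[OF assms]] using assms by (simp add: FF_jj th_def)

lemma gjj_nz: assumes q: "q > 0" and r: "ln q < r" shows "gfun v q j j r \<noteq> 0"
  unfolding gfun_alt[OF le_refl] FF_jj using x_ne1[OF q r] by simp

lemma bound_c: assumes q: "q > 0" and b: "(real n + 1)^2 < v / q"
  shows "v / (q * (real n + 1)) - real n > 0"
proof -
  have p: "real n + 1 > 0" by simp
  have "(real n + 1)^2 / (real n + 1) < v / q / (real n + 1)"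
    by (rule divide_strict_right_mono[OF b p])
  moreover have "(real n + 1)^2 / (real n + 1) = real n + 1" by (simp add: power2_eq_square)
  moreover have "v / q / (real n + 1) = v / (q * (real n + 1))" by simp
  ultimately show ?thesis by simp
qed

lemma crum_lt: assumes q: "q > 0" and b: "(real n + 1)^2 < v / q" and jn: "j < n"
  shows "g1 v q j n r - wfun v q j r * gfun v q j n r = (kap v q j - kap v q n) * gfun v q (Suc j) n r"
    and "kap v q j - kap v q n \<noteq> 0"
proof -
  define A1 where "A1 = v / (q * (real n + 1))"
  have c: "A1 - real n > 0" using bound_c[OF q b] unfolding A1_def .
  define N where "N = n - j - 1"
  have nj: "n - j = Suc N" using jn unfolding N_def by simp
  have a: "real j - real n = - real (Suc N)" using jn unfolding N_def by (simp add: of_nat_diff)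
  define V where "V = v / q"
  have j1: "real j + 1 \<noteq> 0" and n1: "real n + 1 \<noteq> 0" by simp_all
  have A1V: "A1 = V / (real n + 1)" unfolding A1_def V_def by simp
  have k: "kap v q j - kap v q n = V / (2 * (real j + 1)) - V / (2 * (real n + 1)) + (real n - real j) / 2"
  proof -
    have "v / (2 * q * (real j + 1)) = V / (2 * (real j + 1))" "v / (2 * q * (real n + 1)) = V / (2 * (real n + 1))"
      unfolding V_def by (simp_all add: divide_divide_eq_left mult.commute mult.left_commute)
    then show ?thesis unfolding kap_def by (simp add: diff_divide_distrib add_divide_distrib)
  qed
  have s2: "(real j - real n) + (real j + 1 + A1) - (A1 - real n) + 1 = 2 * (real j + 1)" by simp
  have "(V / (2 * (real j + 1)) - V / (2 * (real n + 1)) + (real n - real j) / 2) * (2 * (real j + 1))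
      = V - V * (real j + 1) / (real n + 1) + (real n - real j) * (real j + 1)"
  proof -
    have dd: "(A - B + C) * D = A * D - B * D + C * D" for A B C D :: real by (simp add: algebra_simps)
    have t1: "V / (2 * (real j + 1)) * (2 * (real j + 1)) = V" using j1 by simp
    have gen: "a \<noteq> 0 \<Longrightarrow> V / (2 * a) * (2 * b) = V * b / a" for a b :: real by (simp add: field_simps)
    have t2: "V / (2 * (real n + 1)) * (2 * (real j + 1)) = V * (real j + 1) / (real n + 1)" by (rule gen[OF n1])
    have t3: "(real n - real j) / 2 * (2 * (real j + 1)) = (real n - real j) * (real j + 1)" by simp
    show ?thesis unfolding dd t1 t2 t3 ..
  qed
  also have "\<dots> = (real n - real j) * (V / (real n + 1)) + (real n - real j) * (real j + 1)"
    using n1 by (simp add: field_simps)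
  also have "\<dots> = - (real j - real n) * (real j + 1 + A1)"
    unfolding A1V by (simp add: algebra_simps)
  finally have lam: "(kap v q j - kap v q n) * ((real j - real n) + (real j + 1 + A1) - (A1 - real n) + 1)
        = - (real j - real n) * (real j + 1 + A1)"
    unfolding s2 k .
  have P: "Polynomial.smult (kap v q j - kap v q n) (FF v q j n) - th (FF v q j n)
      = Polynomial.smult (kap v q j - kap v q n) ([:1,-1:] * FF v q (Suc j) n)"
  proof -
    have e1: "FF v q j n = Fp (real j - real n) (real j + 1 + A1) (A1 - real n) (Suc N)"
      unfolding FF_def A1_def nj ..
    have e2: "FF v q (Suc j) n = Fp (real j - real n + 1) (real j + 1 + A1 + 1) (A1 - real n) N"
      unfolding FF_def A1_def N_def by (simp add: algebra_simps)
    show ?thesis unfolding e1 e2 by (rule crum_poly[OF a c lam])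
  qed
  have "(kap v q j - kap v q n) * poly (FF v q j n) (q * exp (- r)) - poly (th (FF v q j n)) (q * exp (- r))
      = (kap v q j - kap v q n) * ((1 - q * exp (- r)) * poly (FF v q (Suc j) n) (q * exp (- r)))"
    using arg_cong[OF P, of "\<lambda>p. poly p (q * exp (- r))"] by (simp add: algebra_simps)
  then show "g1 v q j n r - wfun v q j r * gfun v q j n r = (kap v q j - kap v q n) * gfun v q (Suc j) n r"
    unfolding crum_real[OF less_imp_le[OF jn]] gfun_alt[OF Suc_leI[OF jn]] by simp
  have "- (real j - real n) * (real j + 1 + A1) \<noteq> 0"
    using jn c by (simp add: add_pos_pos)
  then show "kap v q j - kap v q n \<noteq> 0" using lam by auto
qed

lemma ode_alg: fixes x K m A a b F F1 F2 :: real
  assumes x: "x \<noteq> 1" and h: "F2 + 2*K*F1 = x * (F2 + (a+b)*F1 + a*b*F)"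
    and hab: "a + b = 2*K + 2*m" and hA: "A - 2*K*m - m^2 = -(a*b)"
  shows "(-K + m*(x/(1-x))) * ((-K + m*(x/(1-x))) * F + - F1)
      + (- (m*(x/(1-x)^2)) * F - (-K + m*(x/(1-x))) * F1 + F2)
      = ((m-1)*m*x/(1-x)^2 - A*x/(1-x) + K^2) * F"
proof -
  have ab: "a * b = 2*K*m + m^2 - A" using hA by simp
  have E: "F2 + 2*K*F1 - x*(F2 + (2*K+2*m)*F1 + (2*K*m+m^2-A)*F) = 0"
    using h unfolding hab ab by simp
  define y where "y = 1 - x"
  have y: "y \<noteq> 0" using x unfolding y_def by simp
  have xy: "x = 1 - y" unfolding y_def by simp
  have "(-K + m*(x/y)) * ((-K + m*(x/y)) * F + - F1)
      + (- (m*(x/y^2)) * F - (-K + m*(x/y)) * F1 + F2)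
      - ((m-1)*m*x/y^2 - A*x/y + K^2) * F
      = (F2 + 2*K*F1 - x*(F2 + (2*K+2*m)*F1 + (2*K*m+m^2-A)*F)) / y"
    using y apply (simp add: field_simps power2_eq_square)
    by (simp add: xy algebra_simps)
  then show ?thesis unfolding E y_def by simp
qed



lemma psi0_gfun: "psi0 v q k = gfun v q 0 k"
  by (rule ext) (simp add: psi0_def gfun_def ac_simps)

lemma exp_shift: "exp ((- K - real i) * r) = exp (- (K * r)) * exp (- r) ^ i"
proof -
  have "exp ((- K - real i) * r) = exp (- (K * r) + real i * (- r))"
    by (rule arg_cong[where f=exp]) (simp add: algebra_simps)
  also have "\<dots> = exp (- (K * r)) * exp (- r) ^ i" by (simp only: exp_add exp_of_nat_mult)
  finally show ?thesis .
qed

lemma smooth_psi0: "smooth (psi0 v q k)"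
proof -
  define K where "K = kap v q k"
  define h where "h = hc (- real k) (v / ((k + 1) * q) + 1) (v / ((k + 1) * q) - k)"
  have "psi0 v q k = (\<lambda>r. \<Sum>i\<in>{..k}. (h i * q ^ i) * exp ((- K - real i) * r)
          + (- (h i * q ^ Suc i)) * exp ((- K - real (Suc i)) * r))"
  proof
    fix r
    have "psi0 v q k r = (1 - q * exp (- r)) * exp (- (K * r)) * (\<Sum>i\<le>k. h i * (q * exp (- r)) ^ i)"
      unfolding psi0_def hyp_Fp[of "- real k" k, OF refl] Fp_def h_def K_def kap_def
      by (simp add: poly_sum poly_monom add.commute)
    also have "\<dots> = (\<Sum>i\<le>k. (1 - q * exp (- r)) * exp (- (K * r)) * (h i * (q * exp (- r)) ^ i))"
      by (simp add: sum_distrib_left)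
    also have "\<dots> = (\<Sum>i\<in>{..k}. (h i * q ^ i) * exp ((- K - real i) * r)
          + (- (h i * q ^ Suc i)) * exp ((- K - real (Suc i)) * r))"
      unfolding exp_shift by (intro sum.cong refl) (simp add: algebra_simps power_mult_distrib)
    finally show "psi0 v q k r = (\<Sum>i\<in>{..k}. (h i * q ^ i) * exp ((- K - real i) * r)
          + (- (h i * q ^ Suc i)) * exp ((- K - real (Suc i)) * r))" .
  qed
  then show ?thesis
    using smooth_expsum[where c = "\<lambda>i. h i * q ^ i" and a = "\<lambda>i. - K - real i"
        and d = "\<lambda>i. - (h i * q ^ Suc i)" and b = "\<lambda>i. - K - real (Suc i)" and S = "{..k}"]
    by simp
qed

lemma deriv_loc:
  fixes q r :: real
  assumes eq: "\<And>s. ln q < s \<Longrightarrow> f s = c * g s" and r: "ln q < r"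
    and d: "(g has_real_derivative g') (at r)"
  shows "deriv f r = c * g'" and "(f has_real_derivative c * g') (at r)"
proof -
  have ev: "eventually (\<lambda>s. f s = c * g s) (nhds r)"
    using eventually_nhds_in_open[of "{ln q<..}" r] r eq
    by (auto elim!: eventually_mono)
  have "deriv f r = deriv (\<lambda>s. c * g s) r" by (rule deriv_cong_ev[OF ev refl])
  also have "\<dots> = c * g'" by (rule DERIV_imp_deriv[OF DERIV_cmult[OF d]])
  finally show "deriv f r = c * g'" .
  show "(f has_real_derivative c * g') (at r)"
    by (rule has_field_derivative_transform_within_open[OF DERIV_cmult[OF d], of "{ln q<..}"])
       (use r eq in auto)
qed

lemma crum_main:
  fixes v q :: real
  assumes q: "q > 0" and b: "(real N + 1)^2 < v / q"
  shows "j \<le> N \<Longrightarrow> (\<forall>i<j. \<forall>r. ln q < r \<longrightarrow> Mop v q j (psi0 v q i) r = 0) \<and>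
     (\<forall>n. j \<le> n \<longrightarrow> n \<le> N \<longrightarrow> (\<exists>c. c \<noteq> 0 \<and> (\<forall>r. ln q < r \<longrightarrow> Mop v q j (psi0 v q n) r = c * gfun v q j n r)))"
proof (induction j)
  case 0
  show ?case unfolding Mop_0 psi0_gfun by auto
next
  case (Suc j)
  have jN: "j \<le> N" using Suc.prems by simp
  note IH = Suc.IH[OF jN]
  have bn: "(real n + 1)^2 < v / q" if "n \<le> N" for n
  proof -
    have "(real n + 1)^2 \<le> (real N + 1)^2" using that by (intro power_mono) auto
    then show ?thesis using b by linarith
  qed
  have P1: "Mop v q (Suc j) (psi0 v q i) r = 0" if i: "i < Suc j" and r: "ln q < r" for i r
  proof (cases "i < j")
    case True
    have z: "\<And>s. ln q < s \<Longrightarrow> Mop v q j (psi0 v q i) s = 0 * Mop v q j (psi0 v q i) s"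
      using IH True by simp
    have "deriv (Mop v q j (psi0 v q i)) r = 0 * deriv (Mop v q j (psi0 v q i)) r"
      by (rule deriv_loc(1)[OF _ r, of _ 0 "Mop v q j (psi0 v q i)"])
         (use IH True in auto, rule DERIV_deriv_iff_real_differentiable[THEN iffD2],
          use Mop_deriv[OF q smooth_psi0 r] DERIV_differentiable in blast)
    then show ?thesis unfolding Mop_Suc[OF q smooth_psi0 r] using IH True r by simp
  next
    case False
    then have ij: "i = j" using i by simp
    obtain c where c: "c \<noteq> 0" "\<And>r. ln q < r \<Longrightarrow> Mop v q j (psi0 v q j) r = c * gfun v q j j r"
      using IH jN by blast
    have "deriv (Mop v q j (psi0 v q j)) r = c * g1 v q j j r"
      by (rule deriv_loc(1)[OF c(2) r gfun_deriv[OF q r le_refl]])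
    then show ?thesis unfolding ij Mop_Suc[OF q smooth_psi0 r] c(2)[OF r]
      using crum_eq[of j j v q r] by (simp add: algebra_simps)
  qed
  have P2: "\<exists>c. c \<noteq> 0 \<and> (\<forall>r. ln q < r \<longrightarrow> Mop v q (Suc j) (psi0 v q n) r = c * gfun v q (Suc j) n r)"
    if n: "Suc j \<le> n" "n \<le> N" for n
  proof -
    obtain c where c: "c \<noteq> 0" "\<And>r. ln q < r \<Longrightarrow> Mop v q j (psi0 v q n) r = c * gfun v q j n r"
      using IH n by (meson Suc_leD)
    have jn: "j < n" using n by simp
    note cl = crum_lt[OF q bn[OF n(2)] jn]
    have "Mop v q (Suc j) (psi0 v q n) r = (c * (kap v q j - kap v q n)) * gfun v q (Suc j) n r"
      if r: "ln q < r" for r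
    proof -
      have "deriv (Mop v q j (psi0 v q n)) r = c * g1 v q j n r"
        by (rule deriv_loc(1)[OF c(2) r gfun_deriv[OF q r less_imp_le[OF jn]]])
      then have "Mop v q (Suc j) (psi0 v q n) r = c * g1 v q j n r - wfun v q j r * (c * gfun v q j n r)"
        unfolding Mop_Suc[OF q smooth_psi0 r] c(2)[OF r] by simp
      also have "\<dots> = c * (g1 v q j n r - wfun v q j r * gfun v q j n r)" by (simp add: algebra_simps)
      also have "\<dots> = (c * (kap v q j - kap v q n)) * gfun v q (Suc j) n r" unfolding cl(1) by simp
      finally show ?thesis .
    qed
    moreover have "c * (kap v q j - kap v q n) \<noteq> 0" using c(1) cl(2) by simp
    ultimately show ?thesis by blast
  qed
  show ?case using P1 P2 by blast
qed



lemma wr_nz: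
  fixes v q :: real
  assumes q: "q > 0" and b: "(real N + 1)^2 < v / q" and r: "ln q < r"
  shows "j \<le> N \<Longrightarrow> wronskian j (psi0 v q) r \<noteq> 0"
proof (induction j)
  case 0
  show ?case unfolding wronskian_def by (simp add: det_dim_zero)
next
  case (Suc j)
  have jN: "j \<le> N" using Suc.prems by simp
  note cm = crum_main[OF q b jN]
  have "wronskian (Suc j) (psi0 v q) r = wronskian j (psi0 v q) r * (\<Sum>l\<le>j. mc v q j l r * (deriv ^^ l) (psi0 v q j) r)"
    by (rule wronskian_step[where c = "\<lambda>l. mc v q j l r"]) (use cm r in \<open>auto simp: mc_eq Mop_def\<close>)
  moreover obtain c where c: "c \<noteq> 0" "\<And>r. ln q < r \<Longrightarrow> Mop v q j (psi0 v q j) r = c * gfun v q j j r"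
    using cm jN by blast
  ultimately have "wronskian (Suc j) (psi0 v q) r = wronskian j (psi0 v q) r * (c * gfun v q j j r)"
    using r unfolding Mop_def by simp
  then show ?case using Suc.IH[OF jN] c(1) gjj_nz[OF q r] by simp
qed

lemma psi_Mop:
  fixes v q :: real
  assumes q: "q > 0" and b: "(real n + 1)^2 < v / q" and r: "ln q < r" and jn: "j \<le> n"
  shows "psi v q j n r = Mop v q j (psi0 v q n) r"
proof -
  define fs where "fs = (\<lambda>i. if i < j then psi0 v q i else psi0 v q n)"
  note cm = crum_main[OF q b jn]
  have "wronskian (Suc j) fs r = wronskian j fs r * (\<Sum>l\<le>j. mc v q j l r * (deriv ^^ l) (fs j) r)"
    by (rule wronskian_step[where c = "\<lambda>l. mc v q j l r"]) (use cm r in \<open>auto simp: mc_eq Mop_def fs_def\<close>)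
  moreover have "wronskian j fs r = wronskian j (psi0 v q) r"
    unfolding wronskian_def by (rule arg_cong[where f = Determinant.det], rule eq_matI) (auto simp: fs_def)
  ultimately have "wronskian (Suc j) fs r = wronskian j (psi0 v q) r * Mop v q j (psi0 v q n) r"
    unfolding Mop_def fs_def by simp
  moreover have "wronskian j (psi0 v q) r \<noteq> 0" by (rule wr_nz[OF q b r jn])
  ultimately show ?thesis unfolding psi_def fs_def[symmetric] by simp
qed

lemma ode_g:
  fixes v q :: real
  assumes q: "q > 0" and b: "(real n + 1)^2 < v / q" and r: "ln q < r" and jn: "j \<le> n"
  shows "g2 v q j n r = (real j * (real j + 1) * q * exp (- r) / (1 - q * exp (- r)) ^ 2
                 - v * exp (- r) / (1 - q * exp (- r)) + kap v q n ^ 2) * gfun v q j n r"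
proof -
  define A1 where "A1 = v / (q * (real n + 1))"
  define x where "x = q * exp (- r)"
  define F where "F = FF v q j n"
  define K where "K = kap v q n"
  define m where "m = real (j + 1)"
  have c: "A1 - real n > 0" using bound_c[OF q b] unfolding A1_def .
  have a: "real j - real n = - real (n - j)" using jn by (simp add: of_nat_diff)
  have F': "F = Fp (real j - real n) (real j + 1 + A1) (A1 - real n) (n - j)"
    unfolding F_def FF_def A1_def ..
  have n1: "real n + 1 \<noteq> 0" by simp
  have K2: "2 * K = A1 - real n - 1"
  proof -
    have g: "2 * (v / (2 * X)) = v / X" for X :: real by simp
    have "2 * K = 2 * (v / (2 * (q * (real n + 1)))) - (real n + 1)"
      unfolding K_def kap_def by (simp add: algebra_simps)
    then show ?thesis unfolding g A1_def by simp
  qed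
  note HP = arg_cong[OF hyp_ode_poly[OF a c, of "real j + 1 + A1"], of "\<lambda>p. poly p x"]
  have h: "poly (th (th F)) x + 2 * K * poly (th F) x
      = x * (poly (th (th F)) x + ((real j - real n) + (real j + 1 + A1)) * poly (th F) x
             + (real j - real n) * (real j + 1 + A1) * poly F x)"
    using HP unfolding F'[symmetric] K2 by (simp add: algebra_simps)
  have hab: "(real j - real n) + (real j + 1 + A1) = 2 * K + 2 * m" unfolding K2 m_def by simp
  have hA: "v / q - 2 * K * m - m^2 = - ((real j - real n) * (real j + 1 + A1))"
  proof -
    have g: "Q \<noteq> 0 \<Longrightarrow> X \<noteq> 0 \<Longrightarrow> v / Q = v / (Q * X) * X" for Q X :: real by (simp add: field_simps)
    have "v / q = A1 * (real n + 1)" unfolding A1_def using g[OF _ n1, of q] q by simp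
    then show ?thesis unfolding K2 m_def by (simp add: algebra_simps power2_eq_square)
  qed
  have x1: "x \<noteq> 1" using x_ne1[OF q r] unfolding x_def by simp
  note oa = ode_alg[OF x1 h hab hA]
  have e1: "real j * (real j + 1) * q * exp (- r) / (1 - q * exp (- r)) ^ 2 = (m - 1) * m * x / (1 - x) ^ 2"
    unfolding m_def x_def by simp
  have e2: "v * exp (- r) / (1 - q * exp (- r)) = v / q * x / (1 - x)"
    unfolding x_def using q by simp
  have G: "gfun v q j n r = exp (- (K * r)) * (1 - x) ^ (j + 1) * poly F x"
    unfolding gfun_alt[OF jn] x_def F_def K_def ..
  have G2: "g2 v q j n r = exp (- (K * r)) * (1 - x) ^ (j + 1) *
      ((-K + m*(x/(1-x))) * ((-K + m*(x/(1-x))) * poly F x + - poly (th F) x)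
      + (- (m*(x/(1-x)^2)) * poly F x - (-K + m*(x/(1-x))) * poly (th F) x + poly (th (th F)) x))"
    unfolding g2_def x_def F_def K_def m_def ..
  show ?thesis unfolding e1 e2 G G2 oa K_def[symmetric] by (simp only: mult_ac)
qed



theorem mainTheorem3:
  fixes v q :: real and j n :: nat
  assumes "v > 0" and "0 < q" and "q < v"
    and "1 \<le> j" and "j \<le> n" and "real n < sqrt (v / q) - 1"
  shows "(\<exists>c. c \<noteq> 0 \<and> (\<forall>r. ln q < r \<longrightarrow>
            psi v q j n r = c * (exp (- ((v / (2 * q * (n + 1)) - (n + 1) / 2) * r))
              * (1 - q * exp (- r)) ^ (j + 1)
              * hyp2F1 (real j - real n) (real j + 1 + v / (q * (n + 1))) (v / (q * (n + 1)) - n)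
                  (q * exp (- r)))))
       \<and> (\<forall>r. ln q < r \<longrightarrow>
            psi v q j n differentiable (at r) \<and> deriv (psi v q j n) differentiable (at r) \<and>
            - deriv (deriv (psi v q j n)) r
              + (j * (j + 1) * q * exp (- r) / (1 - q * exp (- r)) ^ 2
                 - v * exp (- r) / (1 - q * exp (- r))) * psi v q j n r
            = - (((v / (2 * q * (n + 1)) - (n + 1) / 2) ^ 2) * psi v q j n r))"
proof -
  have q: "q > 0" using assms by simp
  have jn: "j \<le> n" using assms by simp
  have b: "(real n + 1)^2 < v / q"
  proof -
    have vq: "v / q \<ge> 0" using assms by simp
    have "real n + 1 < sqrt (v / q)" using assms by simp
    then have "(real n + 1)^2 < (sqrt (v / q))^2" by (intro power_strict_mono) auto
    then show ?thesis using vq by simp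
  qed
  obtain c where c: "c \<noteq> 0" "\<And>r. ln q < r \<Longrightarrow> Mop v q j (psi0 v q n) r = c * gfun v q j n r"
    using crum_main[OF q b jn] jn by blast
  have pc: "psi v q j n r = c * gfun v q j n r" if r: "ln q < r" for r
    using psi_Mop[OF q b r jn] c(2)[OF r] by simp
  have part1: "\<exists>c. c \<noteq> 0 \<and> (\<forall>r. ln q < r \<longrightarrow>
            psi v q j n r = c * (exp (- ((v / (2 * q * (n + 1)) - (n + 1) / 2) * r))
              * (1 - q * exp (- r)) ^ (j + 1)
              * hyp2F1 (real j - real n) (real j + 1 + v / (q * (n + 1))) (v / (q * (n + 1)) - n)
                  (q * exp (- r))))"
  proof (intro exI[of _ c] conjI allI impI)
    show "c \<noteq> 0" by (rule c(1))
  next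
    fix r :: real assume r: "ln q < r"
    show "psi v q j n r = c * (exp (- ((v / (2 * q * (n + 1)) - (n + 1) / 2) * r))
              * (1 - q * exp (- r)) ^ (j + 1)
              * hyp2F1 (real j - real n) (real j + 1 + v / (q * (n + 1))) (v / (q * (n + 1)) - n)
                  (q * exp (- r)))"
      using pc[OF r] unfolding gfun_def of_nat_add of_nat_1 .
  qed
  have part2: "psi v q j n differentiable (at r) \<and> deriv (psi v q j n) differentiable (at r) \<and>
            - deriv (deriv (psi v q j n)) r
              + (j * (j + 1) * q * exp (- r) / (1 - q * exp (- r)) ^ 2
                 - v * exp (- r) / (1 - q * exp (- r))) * psi v q j n r
            = - (((v / (2 * q * (n + 1)) - (n + 1) / 2) ^ 2) * psi v q j n r)"
    if r: "ln q < r" for r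
  proof -
    have d1: "(psi v q j n has_real_derivative c * g1 v q j n r) (at r)"
      by (rule deriv_loc(2)[OF pc r gfun_deriv[OF q r jn]])
    have dd: "deriv (psi v q j n) s = c * g1 v q j n s" if s: "ln q < s" for s
      by (rule deriv_loc(1)[OF pc s gfun_deriv[OF q s jn]])
    have d2: "(deriv (psi v q j n) has_real_derivative c * g2 v q j n r) (at r)"
      by (rule deriv_loc(2)[OF dd r g1_deriv[OF q r]])
    have d2': "deriv (deriv (psi v q j n)) r = c * g2 v q j n r"
      by (rule deriv_loc(1)[OF dd r g1_deriv[OF q r]])
    have o: "g2 v q j n r = (real j * (real j + 1) * q * exp (- r) / (1 - q * exp (- r)) ^ 2
                 - v * exp (- r) / (1 - q * exp (- r)) + kap v q n ^ 2) * gfun v q j n r"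
      by (rule ode_g[OF q b r jn])
    have Veq: "j * (j + 1) * q * exp (- r) / (1 - q * exp (- r)) ^ 2 - v * exp (- r) / (1 - q * exp (- r))
       = real j * (real j + 1) * q * exp (- r) / (1 - q * exp (- r)) ^ 2 - v * exp (- r) / (1 - q * exp (- r))"
      by (simp only: of_nat_mult of_nat_add of_nat_1)
    have Keq: "v / (2 * q * (n + 1)) - (n + 1) / 2 = kap v q n" by (simp only: kap_def of_nat_add of_nat_1)
    have gen: "- (c * ((W + K2) * G)) + W * (c * G) = - (K2 * (c * G))" for W K2 G :: real
      by (simp add: algebra_simps)
    have "- deriv (deriv (psi v q j n)) r
              + (j * (j + 1) * q * exp (- r) / (1 - q * exp (- r)) ^ 2
                 - v * exp (- r) / (1 - q * exp (- r))) * psi v q j n r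
            = - (((v / (2 * q * (n + 1)) - (n + 1) / 2) ^ 2) * psi v q j n r)"
      unfolding d2' pc[OF r] o Veq Keq by (rule gen)
    then show ?thesis by (intro conjI DERIV_differentiable[OF d1] DERIV_differentiable[OF d2])
  qed
  show ?thesis by (intro conjI part1 allI impI part2)
qed


end
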